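(* For every $l\ge\max(|\vec n_1|,|\vec n_2|)$ and all $a'=1,\dots,p_1$, $b'=1,\dots,p_2$, $$(x-y)K^{[l]}_{b',a'}(x,y)=\sum_{b=1}^{p_2}\bar A^{(l)}_{+b,b'}(x)A^{(l-1)}_{-b,a'}(y)-\sum_{a=1}^{p_1}\bar A^{(l-1)}_{-a,b'}(x)A^{(l)}_{+a,a'}(y),$$ $$(x-y)K^{[l]}(x,y)=\sum_{b=1}^{p_2}\bar Q^{(l)}_{+b}(x)Q^{(l-1)}_{-b}(y)-\sum_{a=1}^{p_1}\bar Q^{(l-1)}_{-a}(x)Q^{(l)}_{+a}(y).$$
   Context: Setting: $\mu$ finite Borel measure on an interval, weights $w_{1,a}$ ($a\le p_1$), $w_{2,b}$ ($b\le p_2$), compositions $\vec n_\ell=(n_{\ell,1},\dots,n_{\ell,p_\ell})\in\mathbb N^{p_\ell}$, $|\vec n_\ell|=\sum_an_{\ell,a}$. Each $i\in\mathbb Z_+$ is uniquely $i=q|\vec n_\ell|+n_{\ell,1}+\dots+n_{\ell,a-1}+r$ ($0\le r<n_{\ell,a}$); $a_\ell(i)=a$, $k_\ell(i)=qn_{\ell,a}+r$. $\chi_{\ell,a}(x)$: semi-infinite vector with $i$-th entry $x^{k_\ell(i)}$ if $a_\ell(i)=a$, else $0$; superscript $(i)$ = $i$-th entry, $[l]$ = first $l$ entries. Moment matrix $g_{i,j}=\int x^{k_1(i)+k_2(j)}w_{1,a_1(i)}w_{2,a_2(j)}d\mu$, $g^{[l]}=(g_{i,j})_{0\le i,j<l}$,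 with all $\det g^{[l]}\ne0$ and Gauss–Borel factorization $g=S^{-1}\bar S$ ($S$ unit lower triangular, $\bar S$ upper triangular invertible). $A^{(k)}_a$ = $k$-th entry of $S\chi_{1,a}$, $\bar A^{(k)}_b$ = $k$-th entry of $(\bar S^{-1})^\top\chi_{2,b}$, $Q^{(k)}=\sum_aA^{(k)}_aw_{1,a}$, $\bar Q^{(k)}=\sum_b\bar A^{(k)}_bw_{2,b}$. Kernels: $K^{[l]}_{b',a'}(x,y)=\sum_{k=0}^{l-1}\bar A^{(k)}_{b'}(x)A^{(k)}_{a'}(y)$, $K^{[l]}(x,y)=\sum_{k=0}^{l-1}Q^{(k)}(y)\bar Q^{(k)}(x)$. For an integer $m$ and $a\in\{1,\dots,p_1\}$: $m_{+a}$ is the smallest integer $\ge m$ with $a_1(m_{+a})=a$, and $m_{-a}$ the largest integer $\le m$ with $a_1(m_{-a})=a$; $\bar m_{\pm b}$ are defined likewise using $a_2$ and $b\in\{1,\dots,p_2\}$. $e_j$ denotes the $j$-th canonical basis vector (of the appropriate finite length). Associated polynomials: $A^{(l)}_{+a,a'}(y)=\chi_{1,a'}^{(l_{+a})}(y)-(g_{l_{+a},0},\dots,g_{l_{+a},l-1})(g^{[l]})^{-1}\chi_{1,a'}^{[l]}(y)$; $\bar A^{(m)}_{-a,b'}(x)=(\chi_{2,b'}^{[m+1]}(x))^\top(g^{[m+1]})^{-1}e_{m_{-a}}$; $A^{(m)}_{-b,a'}(y)=e_{\bar m_{-b}}^\top(g^{[m+1]})^{-1}\chi_{1,a'}^{[m+1]}(y)$;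 $\bar A^{(l)}_{+b,b'}(x)=\chi_{2,b'}^{(\bar l_{+b})}(x)-(\chi_{2,b'}^{[l]}(x))^\top(g^{[l]})^{-1}(g_{0,\bar l_{+b}},\dots,g_{l-1,\bar l_{+b}})^\top$. Associated linear forms: $Q^{(m)}_{\pm a}=\sum_{a'}A^{(m)}_{+a,a'}w_{1,a'}$ (for $+$), $\bar Q^{(m)}_{-a}=\sum_{b'}\bar A^{(m)}_{-a,b'}w_{2,b'}$, $Q^{(m)}_{-b}=\sum_{a'}A^{(m)}_{-b,a'}w_{1,a'}$, $\bar Q^{(m)}_{+b}=\sum_{b'}\bar A^{(m)}_{+b,b'}w_{2,b'}$. *)

theory Defs
  imports "HOL-Analysis.Analysis" "Jordan_Normal_Form.Determinant"
    "Jordan_Normal_Form.Gauss_Jordan_Elimination"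
begin

(* A composition \<vec>n = (n 1, ..., n p) is represented by n :: nat \<Rightarrow> nat (only n 1..n p used). *)

definition csize :: "(nat \<Rightarrow> nat) \<Rightarrow> nat \<Rightarrow> nat" where
  "csize n p = (\<Sum>c=1..p. n c)"

(* i = q |n| + n_1 + ... + n_(a-1) + r, 0 \<le> r < n_a :  a(i) and k(i) *)
definition idx_a :: "(nat \<Rightarrow> nat) \<Rightarrow> nat \<Rightarrow> nat \<Rightarrow> nat" where
  "idx_a n p i = (LEAST a. i mod csize n p < (\<Sum>c=1..a. n c))"

definition idx_k :: "(nat \<Rightarrow> nat) \<Rightarrow> nat \<Rightarrow> nat \<Rightarrow> nat" where
  "idx_k n p i = (i div csize n p) * n (idx_a n p i)
      + (i mod csize n p - (\<Sum>c=1..idx_a n p i - 1. n c))"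

definition chi :: "(nat \<Rightarrow> nat) \<Rightarrow> nat \<Rightarrow> nat \<Rightarrow> real \<Rightarrow> nat \<Rightarrow> real" where
  "chi n p a x i = (if idx_a n p i = a then x ^ idx_k n p i else 0)"

definition moment :: "real measure \<Rightarrow> (nat \<Rightarrow> real \<Rightarrow> real) \<Rightarrow> (nat \<Rightarrow> real \<Rightarrow> real)
    \<Rightarrow> (nat \<Rightarrow> nat) \<Rightarrow> nat \<Rightarrow> (nat \<Rightarrow> nat) \<Rightarrow> nat \<Rightarrow> nat \<Rightarrow> nat \<Rightarrow> real" where
  "moment \<mu> w1 w2 n1 p1 n2 p2 i j =
     integral\<^sup>L \<mu> (\<lambda>x. x ^ (idx_k n1 p1 i + idx_k n2 p2 j)
                        * w1 (idx_a n1 p1 i) x * w2 (idx_a n2 p2 j) x)"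

definition trunc :: "(nat \<Rightarrow> nat \<Rightarrow> real) \<Rightarrow> nat \<Rightarrow> real mat" where
  "trunc g l = mat l l (\<lambda>(i,j). g i j)"

definition truncinv :: "(nat \<Rightarrow> nat \<Rightarrow> real) \<Rightarrow> nat \<Rightarrow> real mat" where
  "truncinv g l = the (mat_inverse (trunc g l))"

definition idx_plus :: "(nat \<Rightarrow> nat) \<Rightarrow> nat \<Rightarrow> nat \<Rightarrow> nat \<Rightarrow> nat" where
  "idx_plus n p a m = (LEAST i. m \<le> i \<and> idx_a n p i = a)"

definition idx_minus :: "(nat \<Rightarrow> nat) \<Rightarrow> nat \<Rightarrow> nat \<Rightarrow> nat \<Rightarrow> nat" where
  "idx_minus n p a m = (GREATEST i. i \<le> m \<and> idx_a n p i = a)"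

definition Aplus where
  "Aplus g n1 p1 l a a' y =
     chi n1 p1 a' y (idx_plus n1 p1 a l)
     - (\<Sum>i<l. \<Sum>j<l. g (idx_plus n1 p1 a l) i * (truncinv g l $$ (i,j)) * chi n1 p1 a' y j)"

definition Abar_minus where
  "Abar_minus g n1 p1 n2 p2 m a b' x =
     (\<Sum>i<Suc m. chi n2 p2 b' x i * (truncinv g (Suc m) $$ (i, idx_minus n1 p1 a m)))"

definition Aminus where
  "Aminus g n1 p1 n2 p2 m b a' y =
     (\<Sum>j<Suc m. (truncinv g (Suc m) $$ (idx_minus n2 p2 b m, j)) * chi n1 p1 a' y j)"

definition Abar_plus where
  "Abar_plus g n2 p2 l b b' x =
     chi n2 p2 b' x (idx_plus n2 p2 b l)
     - (\<Sum>i<l. \<Sum>j<l. chi n2 p2 b' x i * (truncinv g l $$ (i,j)) * g j (idx_plus n2 p2 b l))"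

(* A^{(k)}_a(y) = k-th entry of S \<chi>_{1,a}(y)  (S unit lower triangular) *)
definition Apol :: "(nat \<Rightarrow> nat \<Rightarrow> real) \<Rightarrow> (nat \<Rightarrow> nat) \<Rightarrow> nat \<Rightarrow> nat \<Rightarrow> nat \<Rightarrow> real \<Rightarrow> real" where
  "Apol S n1 p1 k a y = (\<Sum>j\<le>k. S k j * chi n1 p1 a y j)"

(* \<bar>A^{(k)}_b(x) = k-th entry of (Sbar^{-1})^T \<chi>_{2,b}(x), Sbi = Sbar^{-1} upper triangular *)
definition Abarpol :: "(nat \<Rightarrow> nat \<Rightarrow> real) \<Rightarrow> (nat \<Rightarrow> nat) \<Rightarrow> nat \<Rightarrow> nat \<Rightarrow> nat \<Rightarrow> real \<Rightarrow> real" where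
  "Abarpol Sbi n2 p2 k b x = (\<Sum>j\<le>k. Sbi j k * chi n2 p2 b x j)"

definition Qlf where
  "Qlf S n1 p1 w1 k y = (\<Sum>a=1..p1. Apol S n1 p1 k a y * w1 a y)"

definition Qbarlf where
  "Qbarlf Sbi n2 p2 w2 k x = (\<Sum>b=1..p2. Abarpol Sbi n2 p2 k b x * w2 b x)"

definition Kba where
  "Kba S Sbi n1 p1 n2 p2 l b' a' x y =
     (\<Sum>k<l. Abarpol Sbi n2 p2 k b' x * Apol S n1 p1 k a' y)"

definition Kfull where
  "Kfull S Sbi n1 p1 n2 p2 w1 w2 l x y =
     (\<Sum>k<l. Qlf S n1 p1 w1 k y * Qbarlf Sbi n2 p2 w2 k x)"

definition Qplus where
  "Qplus g n1 p1 w1 m a y = (\<Sum>a'=1..p1. Aplus g n1 p1 m a a' y * w1 a' y)"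

definition Qbar_minus where
  "Qbar_minus g n1 p1 n2 p2 w2 m a x = (\<Sum>b'=1..p2. Abar_minus g n1 p1 n2 p2 m a b' x * w2 b' x)"

definition Qminus where
  "Qminus g n1 p1 n2 p2 w1 m b y = (\<Sum>a'=1..p1. Aminus g n1 p1 n2 p2 m b a' y * w1 a' y)"

definition Qbar_plus where
  "Qbar_plus g n2 p2 w2 m b x = (\<Sum>b'=1..p2. Abar_plus g n2 p2 m b b' x * w2 b' x)"

end

theory Submission
  imports Defs
begin


lemma psum_mono: "a \<le> b \<Longrightarrow> (\<Sum>c=1..a. n c) \<le> (\<Sum>c=1..b. (n::nat\<Rightarrow>nat) c)"
  by (rule sum_mono2) auto

lemma psum_step: "a \<ge> 1 \<Longrightarrow> (\<Sum>c=1..a. n c) = (\<Sum>c=1..a-1. n c) + (n::nat\<Rightarrow>nat) a"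
  by (cases a) (auto simp: sum.cl_ivl_Suc)

locale comp =
  fixes n :: "nat \<Rightarrow> nat" and p :: nat
  assumes p1: "p \<ge> 1" and pos: "\<forall>c\<in>{1..p}. n c > 0"
begin

abbreviation "N \<equiv> csize n p"
abbreviation "PS a \<equiv> (\<Sum>c=1..a. n c)"

lemma N_pos: "N > 0"
proof -
  have "n p > 0" using pos p1 by auto
  thus ?thesis unfolding csize_def using psum_step[of p n] p1 by linarith
qed

lemma idx_a_props: "idx_a n p i \<in> {1..p}" "PS (idx_a n p i - 1) \<le> i mod N"
  "i mod N < PS (idx_a n p i)"
proof -
  let ?r = "i mod N"
  have rN: "?r < PS p" using N_pos unfolding csize_def by simp
  hence ex: "\<exists>a. ?r < PS a" by blast
  note ia = idx_a_def[of n p i]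
  show c: "?r < PS (idx_a n p i)" unfolding ia by (rule LeastI_ex[OF ex])
  have "idx_a n p i \<le> p" unfolding ia by (rule Least_le) (rule rN)
  moreover have "idx_a n p i \<noteq> 0"
  proof
    assume "idx_a n p i = 0" with c show False by simp
  qed
  ultimately show "idx_a n p i \<in> {1..p}" by auto
  show "PS (idx_a n p i - 1) \<le> ?r"
    using not_less_Least[of "idx_a n p i - 1" "\<lambda>a. ?r < PS a"] \<open>idx_a n p i \<noteq> 0\<close>
    unfolding ia by (simp add: ia)
qed

lemma idx_a_eq: assumes "a \<ge> 1" "PS (a-1) \<le> i mod N" "i mod N < PS a"
  shows "idx_a n p i = a"
  unfolding idx_a_def
proof (rule Least_equality)
  show "i mod N < PS a" by fact
  fix b assume b: "i mod N < PS b"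
  show "a \<le> b"
  proof (rule ccontr)
    assume "\<not> a \<le> b" hence "b \<le> a - 1" by simp
    hence "PS b \<le> PS (a-1)" by (rule psum_mono)
    thus False using b assms by simp
  qed
qed

lemma idx_k_alt: "idx_k n p i = (i div N) * n (idx_a n p i) + (i mod N - PS (idx_a n p i - 1))"
  "i mod N - PS (idx_a n p i - 1) < n (idx_a n p i)"
  using idx_a_props[of i] psum_step[of "idx_a n p i" n] unfolding idx_k_def by auto

lemma k_mono: assumes "idx_a n p i = idx_a n p j" "i < j" shows "idx_k n p i < idx_k n p j"
proof -
  let ?a = "idx_a n p i"
  have "i div N \<le> j div N" using assms(2) by (simp add: div_le_mono)
  show ?thesis
  proof (cases "i div N = j div N")
    case True
    have "i = (j div N) * N + i mod N" "j = (j div N) * N + j mod N"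
      using div_mult_mod_eq[of i N] div_mult_mod_eq[of j N] True by simp_all
    hence "i mod N < j mod N" using assms(2) by linarith
    have e1: "idx_k n p i = (j div N) * n ?a + (i mod N - PS (?a - 1))" using idx_k_alt(1)[of i] True by simp
    have e2: "idx_k n p j = (j div N) * n ?a + (j mod N - PS (?a - 1))" using idx_k_alt(1)[of j] assms(1) by simp
    show ?thesis using e1 e2 idx_a_props(2)[of i] \<open>i mod N < j mod N\<close> by linarith
  next
    case False
    hence "Suc (i div N) \<le> j div N" using \<open>i div N \<le> j div N\<close> by simp
    hence "Suc (i div N) * n ?a \<le> (j div N) * n ?a" by (rule mult_le_mono1)
    thus ?thesis using idx_k_alt[of i] idx_k_alt[of j] assms(1) by simp
  qed
qed

lemma k_le_imp_le: "idx_a n p i = idx_a n p j \<Longrightarrow> idx_k n p i \<le> idx_k n p j \<Longrightarrow> i \<le> j"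
  using k_mono[of j i] by (metis not_le)

lemma surj_ak: assumes "a \<in> {1..p}" shows "\<exists>i. idx_a n p i = a \<and> idx_k n p i = k"
proof -
  let ?i = "(k div n a) * N + (PS (a-1) + k mod n a)"
  have na: "n a > 0" using pos assms by auto
  have st: "PS a = PS (a-1) + n a" using psum_step[of a n] assms by auto
  have "PS a \<le> N" unfolding csize_def using assms by (intro psum_mono) auto
  hence lt: "PS (a-1) + k mod n a < N" using st na by (simp add: less_le_trans[OF _ \<open>PS a \<le> N\<close>])
  hence md: "?i mod N = PS (a-1) + k mod n a" and dv: "?i div N = k div n a" by simp_all
  have ia: "idx_a n p ?i = a" using assms md st na by (intro idx_a_eq) auto
  have "idx_k n p ?i = k" using idx_k_alt(1)[of ?i] unfolding ia md dv by simp
  thus ?thesis using ia by blast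
qed

lemma small_idx: assumes "a \<in> {1..p}" shows "idx_a n p (PS (a-1)) = a" "PS (a-1) < N"
proof -
  have na: "n a > 0" using pos assms by auto
  have st: "PS a = PS (a-1) + n a" using psum_step[of a n] assms by auto
  have "PS a \<le> N" unfolding csize_def using assms by (intro psum_mono) auto
  thus lt: "PS (a-1) < N" using st na by linarith
  show "idx_a n p (PS (a-1)) = a" using lt st na assms by (intro idx_a_eq) auto
qed

definition sidx where "sidx i = (SOME j. idx_a n p j = idx_a n p i \<and> idx_k n p j = Suc (idx_k n p i))"

lemma sidx: "idx_a n p (sidx i) = idx_a n p i" "idx_k n p (sidx i) = Suc (idx_k n p i)"
proof -
  have "\<exists>j. idx_a n p j = idx_a n p i \<and> idx_k n p j = Suc (idx_k n p i)"
    using surj_ak[OF idx_a_props(1)[of i]] by blast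
  from someI_ex[OF this] show "idx_a n p (sidx i) = idx_a n p i" "idx_k n p (sidx i) = Suc (idx_k n p i)"
    unfolding sidx_def by auto
qed

lemma chi_sidx: "chi n p a x (sidx i) = x * chi n p a x i"
  unfolding chi_def sidx by simp

lemma sidx_gt: "i < sidx i"
proof -
  have "i \<le> sidx i" using k_le_imp_le[of i "sidx i"] sidx by simp
  moreover have "i \<noteq> sidx i" using sidx(2)[of i] by (metis n_not_Suc_n)
  ultimately show ?thesis by simp
qed

context fixes l assumes l: "l \<ge> N"
begin

lemma minus_props: assumes "a \<in> {1..p}"
  shows "idx_minus n p a (l-1) < l" "idx_a n p (idx_minus n p a (l-1)) = a"
    "\<And>j. j \<le> l - 1 \<Longrightarrow> idx_a n p j = a \<Longrightarrow> j \<le> idx_minus n p a (l-1)"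
proof -
  have w: "PS (a-1) \<le> l - 1 \<and> idx_a n p (PS (a-1)) = a" using small_idx[OF assms] l by auto
  have P: "idx_minus n p a (l-1) \<le> l-1 \<and> idx_a n p (idx_minus n p a (l-1)) = a"
    unfolding idx_minus_def
    by (rule GreatestI_nat[where P="\<lambda>j. j \<le> l-1 \<and> idx_a n p j = a", OF w]) auto
  have "l > 0" using l N_pos by simp
  thus "idx_minus n p a (l-1) < l" using P by linarith
  show "idx_a n p (idx_minus n p a (l-1)) = a" using P by simp
  fix j assume "j \<le> l - 1" "idx_a n p j = a"
  thus "j \<le> idx_minus n p a (l-1)"
    unfolding idx_minus_def by (intro Greatest_le_nat[where b="l-1"]) auto
qed

lemma boundary: assumes "i < l" "l \<le> sidx i"
  shows "i = idx_minus n p (idx_a n p i) (l-1)" "sidx i = idx_plus n p (idx_a n p i) l"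
proof -
  let ?a = "idx_a n p i" let ?M = "idx_minus n p ?a (l-1)"
  have a: "?a \<in> {1..p}" by (rule idx_a_props)
  note mp = minus_props[OF a]
  have "i \<le> ?M" using mp(3)[of i] assms by simp
  moreover have "\<not> i < ?M"
  proof
    assume "i < ?M"
    hence "idx_k n p i < idx_k n p ?M" using k_mono mp(2) by simp
    hence "idx_k n p (sidx i) \<le> idx_k n p ?M" using sidx by simp
    hence "sidx i \<le> ?M" using k_le_imp_le mp(2) sidx by simp
    thus False using mp(1) assms by simp
  qed
  ultimately show "i = ?M" by simp
  let ?P = "idx_plus n p ?a l"
  have ex: "l \<le> sidx i \<and> idx_a n p (sidx i) = ?a" using assms sidx by simp
  have P1: "l \<le> ?P \<and> idx_a n p ?P = ?a" unfolding idx_plus_def by (rule LeastI[where P="\<lambda>j. l \<le> j \<and> idx_a n p j = ?a", OF ex])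
  have P2: "?P \<le> sidx i" unfolding idx_plus_def by (rule Least_le[where P="\<lambda>j. l \<le> j \<and> idx_a n p j = ?a", OF ex])
  have "\<not> ?P < sidx i"
  proof
    assume "?P < sidx i"
    hence "idx_k n p ?P < idx_k n p (sidx i)" using k_mono[of ?P "sidx i"] P1 sidx by simp
    hence "idx_k n p ?P \<le> idx_k n p i" using sidx by simp
    hence "?P \<le> i" using k_le_imp_le P1 by simp
    thus False using P1 assms by simp
  qed
  thus "sidx i = ?P" using P2 by simp
qed

lemma minus_boundary: assumes "a \<in> {1..p}" shows "l \<le> sidx (idx_minus n p a (l-1))"
proof (rule ccontr)
  let ?M = "idx_minus n p a (l-1)"
  note mp = minus_props[OF assms]
  assume "\<not> l \<le> sidx ?M"
  hence "sidx ?M \<le> ?M" using mp(3)[of "sidx ?M"] sidx mp(2) by simp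
  thus False using sidx_gt[of ?M] by simp
qed

lemma bset: "{i. i < l \<and> l \<le> sidx i} = (\<lambda>a. idx_minus n p a (l-1)) ` {1..p}"
  using boundary minus_boundary minus_props idx_a_props by blast

lemma binj: "inj_on (\<lambda>a. idx_minus n p a (l-1)) {1..p}"
  by (rule inj_onI) (metis minus_props(2))

lemma plus_minus: "a \<in> {1..p} \<Longrightarrow> sidx (idx_minus n p a (l-1)) = idx_plus n p a l"
  using boundary(2)[OF minus_props(1) minus_boundary] minus_props(2) by simp

end
end



lemma split_sum: fixes l :: nat and s :: "nat \<Rightarrow> nat" shows "(\<Sum>i<l. f i) = (\<Sum>i\<in>{i. i<l \<and> s i < l}. f i) + (\<Sum>i\<in>{i. i<l \<and> l \<le> s i}. (f i :: real))"
proof -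
  have "{..<l} = {i. i<l \<and> s i < l} \<union> {i. i<l \<and> l \<le> s i}" by auto
  moreover have "sum f ({i. i<l \<and> s i < l} \<union> {i. i<l \<and> l \<le> s i}) =
     sum f {i. i<l \<and> s i < l} + sum f {i. i<l \<and> l \<le> s i}"
    by (rule sum.union_disjoint) auto
  ultimately show ?thesis by simp
qed

lemma cd_core:
  fixes H g :: "nat \<Rightarrow> nat \<Rightarrow> real" and s1 s2 :: "nat\<Rightarrow>nat" and U V :: "nat \<Rightarrow> real"
  assumes HG: "\<And>i j. i<l \<Longrightarrow> j<l \<Longrightarrow> (\<Sum>k<l. H i k * g k j) = (if i=j then 1 else 0)"
  and GH: "\<And>i j. i<l \<Longrightarrow> j<l \<Longrightarrow> (\<Sum>k<l. g i k * H k j) = (if i=j then 1 else 0)"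
  and sh: "\<And>i j. g (s1 i) j = g i (s2 j)"
  shows "(\<Sum>i<l. \<Sum>j<l. U (s2 i) * H i j * V j) - (\<Sum>i<l. \<Sum>j<l. U i * H i j * V (s1 j)) =
   (\<Sum>b\<in>{i. i<l \<and> l \<le> s2 i}. (U (s2 b) - (\<Sum>i<l. \<Sum>j<l. U i * H i j * g j (s2 b))) * (\<Sum>j<l. H b j * V j))
 - (\<Sum>a\<in>{i. i<l \<and> l \<le> s1 i}. (\<Sum>i<l. U i * H i a) * (V (s1 a) - (\<Sum>i<l. \<Sum>j<l. g (s1 a) i * H i j * V j)))"
proof -
  define W where "W i = (\<Sum>j<l. H i j * V j)" for i
  define Z where "Z j = (\<Sum>i<l. U i * H i j)" for j
  define B1 where "B1 = {i. i<l \<and> l \<le> s1 i}"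
  define B2 where "B2 = {i. i<l \<and> l \<le> s2 i}"
  define C1 where "C1 = {i. i<l \<and> s1 i < l}"
  define C2 where "C2 = {i. i<l \<and> s2 i < l}"
  have Uk: "U k = (\<Sum>j<l. Z j * g j k)" if "k<l" for k
  proof -
    have "(\<Sum>j<l. Z j * g j k) = (\<Sum>j<l. \<Sum>i<l. U i * H i j * g j k)"
      unfolding Z_def by (simp add: sum_distrib_right)
    also have "\<dots> = (\<Sum>i<l. U i * (\<Sum>j<l. H i j * g j k))"
      by (subst sum.swap) (simp add: sum_distrib_left mult.assoc)
    also have "\<dots> = (\<Sum>i<l. if i = k then U i else 0)"
      by (rule sum.cong) (simp_all add: HG that)
    also have "\<dots> = U k" using that by simp
    finally show ?thesis by simp
  qed
  have Vk: "V k = (\<Sum>i<l. g k i * W i)" if "k<l" for k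
  proof -
    have "(\<Sum>i<l. g k i * W i) = (\<Sum>i<l. \<Sum>j<l. g k i * H i j * V j)"
      unfolding W_def by (simp add: sum_distrib_left mult.assoc)
    also have "\<dots> = (\<Sum>j<l. (\<Sum>i<l. g k i * H i j) * V j)"
      by (subst sum.swap) (simp add: sum_distrib_right)
    also have "\<dots> = (\<Sum>j<l. if k = j then V j else 0)"
      by (rule sum.cong) (simp_all add: GH that)
    also have "\<dots> = V k" using that by simp
    finally show ?thesis by simp
  qed
  have L1: "(\<Sum>i<l. \<Sum>j<l. U (s2 i) * H i j * V j) = (\<Sum>i<l. U (s2 i) * W i)"
    unfolding W_def by (simp add: sum_distrib_left mult.assoc)
  have L2: "(\<Sum>i<l. \<Sum>j<l. U i * H i j * V (s1 j)) = (\<Sum>j<l. Z j * V (s1 j))"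
    unfolding Z_def by (subst sum.swap) (simp add: sum_distrib_right)
  have R1: "(\<Sum>i<l. \<Sum>j<l. U i * H i j * g j k) = (\<Sum>j<l. Z j * g j k)" for k
    unfolding Z_def by (subst sum.swap) (simp add: sum_distrib_right)
  have R2: "(\<Sum>i<l. \<Sum>j<l. g k i * H i j * V j) = (\<Sum>i<l. g k i * W i)" for k
    unfolding W_def by (simp add: sum_distrib_left mult.assoc)
  define T where "T = (\<Sum>i<l. (\<Sum>j<l. Z j * g j (s2 i)) * W i)"
  define T' where "T' = (\<Sum>j<l. Z j * (\<Sum>i<l. g (s1 j) i * W i))"
  have TT: "T = T'" unfolding T_def T'_def sh
  proof -
    have "(\<Sum>i<l. (\<Sum>j<l. Z j * g j (s2 i)) * W i) = (\<Sum>i<l. \<Sum>j<l. Z j * (g j (s2 i) * W i))"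
      by (simp add: sum_distrib_right mult.assoc)
    also have "\<dots> = (\<Sum>j<l. \<Sum>i<l. Z j * (g j (s2 i) * W i))" by (rule sum.swap)
    also have "\<dots> = (\<Sum>j<l. Z j * (\<Sum>i<l. g j (s2 i) * W i))" by (simp add: sum_distrib_left)
    finally show "(\<Sum>i<l. (\<Sum>j<l. Z j * g j (s2 i)) * W i) = (\<Sum>j<l. Z j * (\<Sum>i<l. g j (s2 i) * W i))" .
  qed
  have E1: "(\<Sum>i<l. U (s2 i) * W i) = T - (\<Sum>i\<in>B2. (\<Sum>j<l. Z j * g j (s2 i)) * W i) + (\<Sum>i\<in>B2. U (s2 i) * W i)"
  proof -
    have "(\<Sum>i<l. U (s2 i) * W i) = (\<Sum>i\<in>C2. U (s2 i) * W i) + (\<Sum>i\<in>B2. U (s2 i) * W i)"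
      unfolding B2_def C2_def by (rule split_sum)
    moreover have "(\<Sum>i\<in>C2. U (s2 i) * W i) = (\<Sum>i\<in>C2. (\<Sum>j<l. Z j * g j (s2 i)) * W i)"
      by (rule sum.cong) (auto simp: C2_def Uk)
    moreover have "T = (\<Sum>i\<in>C2. (\<Sum>j<l. Z j * g j (s2 i)) * W i) + (\<Sum>i\<in>B2. (\<Sum>j<l. Z j * g j (s2 i)) * W i)"
      unfolding T_def B2_def C2_def by (rule split_sum)
    ultimately show ?thesis by simp
  qed
  have E2: "(\<Sum>j<l. Z j * V (s1 j)) = T' - (\<Sum>j\<in>B1. Z j * (\<Sum>i<l. g (s1 j) i * W i)) + (\<Sum>j\<in>B1. Z j * V (s1 j))"
  proof -
    have "(\<Sum>j<l. Z j * V (s1 j)) = (\<Sum>j\<in>C1. Z j * V (s1 j)) + (\<Sum>j\<in>B1. Z j * V (s1 j))"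
      unfolding B1_def C1_def by (rule split_sum)
    moreover have "(\<Sum>j\<in>C1. Z j * V (s1 j)) = (\<Sum>j\<in>C1. Z j * (\<Sum>i<l. g (s1 j) i * W i))"
      by (rule sum.cong) (auto simp: C1_def Vk)
    moreover have "T' = (\<Sum>j\<in>C1. Z j * (\<Sum>i<l. g (s1 j) i * W i)) + (\<Sum>j\<in>B1. Z j * (\<Sum>i<l. g (s1 j) i * W i))"
      unfolding T'_def B1_def C1_def by (rule split_sum)
    ultimately show ?thesis by simp
  qed
  have RHS: "(\<Sum>b\<in>B2. (U (s2 b) - (\<Sum>i<l. \<Sum>j<l. U i * H i j * g j (s2 b))) * (\<Sum>j<l. H b j * V j))
   - (\<Sum>a\<in>B1. (\<Sum>i<l. U i * H i a) * (V (s1 a) - (\<Sum>i<l. \<Sum>j<l. g (s1 a) i * H i j * V j)))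
   = ((\<Sum>i\<in>B2. U (s2 i) * W i) - (\<Sum>i\<in>B2. (\<Sum>j<l. Z j * g j (s2 i)) * W i))
     - ((\<Sum>j\<in>B1. Z j * V (s1 j)) - (\<Sum>j\<in>B1. Z j * (\<Sum>i<l. g (s1 j) i * W i)))"
    unfolding R1 R2 W_def[symmetric] Z_def[symmetric]
    by (simp add: sum_subtractf[symmetric] left_diff_distrib right_diff_distrib)
  show ?thesis unfolding L1 L2 B1_def[symmetric] B2_def[symmetric] RHS E1 E2 TT by simp
qed




lemma mult_entry: assumes "A \<in> carrier_mat l l" "B \<in> carrier_mat l l" "i < l" "j < l"
  shows "(A * B) $$ (i,j) = (\<Sum>k<l. A $$ (i,k) * B $$ (k,j))"
  using assms by (simp add: scalar_prod_def atLeast0LessThan)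

lemma sum_ext_le: assumes "k < (l::nat)" "\<And>i. k < i \<Longrightarrow> f i = (0::real)"
  shows "(\<Sum>i\<le>k. f i) = (\<Sum>i<l. f i)"
  by (rule sum.mono_neutral_left) (use assms in auto)

lemma prod_sums: "(\<Sum>k\<in>K. (\<Sum>a\<in>A. f k a * u a) * (\<Sum>b\<in>B. h k b * v b)) =
   (\<Sum>a\<in>A. \<Sum>b\<in>B. u a * v b * (\<Sum>k\<in>K. f k a * h k b :: real))"
proof -
  have "(\<Sum>k\<in>K. (\<Sum>a\<in>A. f k a * u a) * (\<Sum>b\<in>B. h k b * v b)) =
     (\<Sum>k\<in>K. \<Sum>a\<in>A. \<Sum>b\<in>B. u a * v b * (f k a * h k b))"
    by (simp add: sum_product mult_ac)
  also have "\<dots> = (\<Sum>a\<in>A. \<Sum>k\<in>K. \<Sum>b\<in>B. u a * v b * (f k a * h k b))" by (rule sum.swap)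
  also have "\<dots> = (\<Sum>a\<in>A. \<Sum>b\<in>B. \<Sum>k\<in>K. u a * v b * (f k a * h k b))"
    by (rule sum.cong[OF refl], rule sum.swap)
  also have "\<dots> = (\<Sum>a\<in>A. \<Sum>b\<in>B. u a * v b * (\<Sum>k\<in>K. f k a * h k b))"
    by (simp add: sum_distrib_left)
  finally show ?thesis .
qed

lemma fin_lemma: assumes "\<And>a b. a\<in>A \<Longrightarrow> b\<in>B \<Longrightarrow> c * K a b = S1 a b - S2 a b"
  shows "c * (\<Sum>a\<in>A. \<Sum>b\<in>B. u a * v b * K a b) =
    (\<Sum>b\<in>B. \<Sum>a\<in>A. v b * u a * S1 a b) - (\<Sum>b\<in>B. \<Sum>a\<in>A. v b * u a * (S2 a b :: real))"
proof -
  have "c * (\<Sum>a\<in>A. \<Sum>b\<in>B. u a * v b * K a b) = (\<Sum>a\<in>A. \<Sum>b\<in>B. u a * v b * (c * K a b))"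
    by (simp add: sum_distrib_left mult_ac)
  also have "\<dots> = (\<Sum>a\<in>A. \<Sum>b\<in>B. u a * v b * (S1 a b - S2 a b))"
    using assms by (intro sum.cong refl) auto
  also have "\<dots> = (\<Sum>a\<in>A. \<Sum>b\<in>B. v b * u a * S1 a b) - (\<Sum>a\<in>A. \<Sum>b\<in>B. v b * u a * S2 a b)"
    by (simp add: sum_subtractf right_diff_distrib mult_ac)
  also have "\<dots> = (\<Sum>b\<in>B. \<Sum>a\<in>A. v b * u a * S1 a b) - (\<Sum>b\<in>B. \<Sum>a\<in>A. v b * u a * S2 a b)"
    by (subst sum.swap, subst (2) sum.swap, rule refl)
  finally show ?thesis .
qed




theorem theorem2p4:
  fixes \<mu> :: "real measure" and I :: "real set"
    and w1 w2 :: "nat \<Rightarrow> real \<Rightarrow> real"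
    and n1 n2 :: "nat \<Rightarrow> nat" and p1 p2 :: nat
    and g S Sbar Sbi :: "nat \<Rightarrow> nat \<Rightarrow> real"
  assumes borel: "sets \<mu> = sets (borel :: real measure)"
    and finite: "finite_measure \<mu>"
    and interval: "is_interval I" and supp: "emeasure \<mu> (UNIV - I) = 0"
    and p1: "p1 \<ge> 1" and p2: "p2 \<ge> 1"
    and n1pos: "\<forall>c\<in>{1..p1}. n1 c > 0" and n2pos: "\<forall>c\<in>{1..p2}. n2 c > 0"
    and integrable: "\<forall>i j. integrable \<mu> (\<lambda>x. x ^ (idx_k n1 p1 i + idx_k n2 p2 j)
                        * w1 (idx_a n1 p1 i) x * w2 (idx_a n2 p2 j) x)"
    and g_def: "g = moment \<mu> w1 w2 n1 p1 n2 p2"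
    and nondeg: "\<forall>l. det (trunc g l) \<noteq> 0"
    and S_unit: "\<forall>i. S i i = 1" and S_lower: "\<forall>i j. i < j \<longrightarrow> S i j = 0"
    and Sbar_upper: "\<forall>i j. j < i \<longrightarrow> Sbar i j = 0" and Sbar_diag: "\<forall>i. Sbar i i \<noteq> 0"
    and gauss_borel: "\<forall>i j. (\<Sum>k\<le>i. S i k * g k j) = Sbar i j"
    and Sbi_upper: "\<forall>i j. j < i \<longrightarrow> Sbi i j = 0"
    and Sbi_right: "\<forall>i j. (\<Sum>k\<le>j. Sbar i k * Sbi k j) = (if i = j then 1 else 0)"
    and Sbi_left: "\<forall>i j. (\<Sum>k\<le>j. Sbi i k * Sbar k j) = (if i = j then 1 else 0)"
  shows "\<forall>l. l \<ge> max (csize n1 p1) (csize n2 p2) \<longrightarrow>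
          (\<forall>a'\<in>{1..p1}. \<forall>b'\<in>{1..p2}. \<forall>x y.
             (x - y) * Kba S Sbi n1 p1 n2 p2 l b' a' x y =
               (\<Sum>b=1..p2. Abar_plus g n2 p2 l b b' x * Aminus g n1 p1 n2 p2 (l - 1) b a' y)
             - (\<Sum>a=1..p1. Abar_minus g n1 p1 n2 p2 (l - 1) a b' x * Aplus g n1 p1 l a a' y))
        \<and> (\<forall>x y.
             (x - y) * Kfull S Sbi n1 p1 n2 p2 w1 w2 l x y =
               (\<Sum>b=1..p2. Qbar_plus g n2 p2 w2 l b x * Qminus g n1 p1 n2 p2 w1 (l - 1) b y)
             - (\<Sum>a=1..p1. Qbar_minus g n1 p1 n2 p2 w2 (l - 1) a x * Qplus g n1 p1 w1 l a y))"
proof (intro allI impI)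
  fix l assume lmax: "l \<ge> max (csize n1 p1) (csize n2 p2)"
  interpret c1: comp n1 p1 using p1 n1pos by unfold_locales auto
  interpret c2: comp n2 p2 using p2 n2pos by unfold_locales auto
  have l1: "l \<ge> csize n1 p1" and l2: "l \<ge> csize n2 p2" using lmax by auto
  have lpos: "l > 0" using l1 c1.N_pos by simp
  have Sl: "Suc (l - 1) = l" using lpos by simp
  define G where "G = trunc g l"
  define H where "H = truncinv g l"
  have Gc: "G \<in> carrier_mat l l" unfolding G_def trunc_def by simp
  obtain B where "mat_inverse G = Some B"
  proof (cases "mat_inverse G")
    case None
    have False using mat_inverse(1)[OF Gc None, where b="()"] det_non_zero_imp_unit[OF Gc, where b="()"] nondeg unfolding G_def by blast
    thus ?thesis ..
  qed
  hence HB: "H = B" and GH: "G * H = 1\<^sub>m l" and HG: "H * G = 1\<^sub>m l" and Hc: "H \<in> carrier_mat l l"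
    using mat_inverse(2)[OF Gc] unfolding H_def truncinv_def G_def by auto
  have Gij: "G $$ (i,j) = g i j" if "i<l" "j<l" for i j using that unfolding G_def trunc_def by simp
  have HGs: "(\<Sum>k<l. H $$ (i,k) * g k j) = (if i=j then 1 else 0)" if "i<l" "j<l" for i j
  proof -
    have "(H * G) $$ (i,j) = (\<Sum>k<l. H $$ (i,k) * g k j)" using mult_entry[OF Hc Gc that] Gij that by simp
    thus ?thesis using HG that by simp
  qed
  have GHs: "(\<Sum>k<l. g i k * H $$ (k,j)) = (if i=j then 1 else 0)" if "i<l" "j<l" for i j
  proof -
    have "(G * H) $$ (i,j) = (\<Sum>k<l. g i k * H $$ (k,j))" using mult_entry[OF Gc Hc that] Gij that by simp
    thus ?thesis using GH that by simp
  qed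
  define Sm where "Sm = mat l l (\<lambda>(i,j). S i j)"
  define Sbim where "Sbim = mat l l (\<lambda>(i,j). Sbi i j)"
  define Sbarm where "Sbarm = mat l l (\<lambda>(i,j). Sbar i j)"
  have Smc: "Sm \<in> carrier_mat l l" "Sbim \<in> carrier_mat l l" "Sbarm \<in> carrier_mat l l"
    unfolding Sm_def Sbim_def Sbarm_def by auto
  have SG: "Sm * G = Sbarm"
  proof (rule eq_matI)
    fix i j assume "i < dim_row Sbarm" "j < dim_col Sbarm"
    hence ij: "i<l" "j<l" unfolding Sbarm_def by auto
    have "(Sm * G) $$ (i,j) = (\<Sum>k<l. S i k * g k j)"
      using mult_entry[OF Smc(1) Gc ij] Gij ij unfolding Sm_def by simp
    also have "\<dots> = (\<Sum>k\<le>i. S i k * g k j)" using S_lower by (intro sum_ext_le[symmetric] ij) auto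
    finally show "(Sm * G) $$ (i,j) = Sbarm $$ (i,j)" using gauss_borel ij unfolding Sbarm_def by simp
  qed (use Smc Gc in auto)
  have SbS: "Sbim * Sbarm = 1\<^sub>m l"
  proof (rule eq_matI)
    fix i j assume "i < dim_row (1\<^sub>m l :: real mat)" "j < dim_col (1\<^sub>m l :: real mat)"
    hence ij: "i<l" "j<l" by auto
    have "(Sbim * Sbarm) $$ (i,j) = (\<Sum>k<l. Sbi i k * Sbar k j)"
      using mult_entry[OF Smc(2) Smc(3) ij] ij unfolding Sbim_def Sbarm_def by simp
    also have "\<dots> = (\<Sum>k\<le>j. Sbi i k * Sbar k j)" using Sbar_upper by (intro sum_ext_le[symmetric] ij) auto
    finally show "(Sbim * Sbarm) $$ (i,j) = 1\<^sub>m l $$ (i,j)" using Sbi_left ij by simp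
  qed (use Smc in auto)
  have HS: "H = Sbim * Sm"
  proof -
    have "Sbim * Sm = (Sbim * Sm) * (G * H)" using GH Smc by simp
    also have "\<dots> = (Sbim * (Sm * G)) * H" using Smc Gc Hc by (simp add: assoc_mult_mat[of _ l l _ l _ l])
    also have "\<dots> = H" unfolding SG SbS using Hc by simp
    finally show ?thesis by simp
  qed
  have Hij: "H $$ (i,j) = (\<Sum>k<l. Sbi i k * S k j)" if "i<l" "j<l" for i j
    using mult_entry[OF Smc(2) Smc(1) that] that unfolding HS Sbim_def Sm_def by simp
  have Kform: "Kba S Sbi n1 p1 n2 p2 l b' a' x y =
     (\<Sum>i<l. \<Sum>j<l. chi n2 p2 b' x i * H $$ (i,j) * chi n1 p1 a' y j)" for b' a' x y
  proof -
    let ?U = "chi n2 p2 b' x" and ?V = "chi n1 p1 a' y"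
    have "Kba S Sbi n1 p1 n2 p2 l b' a' x y = (\<Sum>k<l. (\<Sum>i<l. Sbi i k * ?U i) * (\<Sum>j<l. S k j * ?V j))"
      unfolding Kba_def Abarpol_def Apol_def
    proof (rule sum.cong[OF refl])
      fix k assume "k \<in> {..<l}" hence k: "k < l" by simp
      show "(\<Sum>j\<le>k. Sbi j k * ?U j) * (\<Sum>j\<le>k. S k j * ?V j) = (\<Sum>i<l. Sbi i k * ?U i) * (\<Sum>j<l. S k j * ?V j)"
        using sum_ext_le[OF k, of "\<lambda>j. Sbi j k * ?U j"] sum_ext_le[OF k, of "\<lambda>j. S k j * ?V j"]
          Sbi_upper S_lower by simp
    qed
    also have "\<dots> = (\<Sum>k<l. \<Sum>i<l. \<Sum>j<l. ?U i * (Sbi i k * S k j) * ?V j)"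
      unfolding sum_product by (intro sum.cong refl) (simp add: mult_ac)
    also have "\<dots> = (\<Sum>i<l. \<Sum>k<l. \<Sum>j<l. ?U i * (Sbi i k * S k j) * ?V j)" by (rule sum.swap)
    also have "\<dots> = (\<Sum>i<l. \<Sum>j<l. \<Sum>k<l. ?U i * (Sbi i k * S k j) * ?V j)"
      by (rule sum.cong[OF refl], rule sum.swap)
    also have "\<dots> = (\<Sum>i<l. \<Sum>j<l. ?U i * H $$ (i,j) * ?V j)"
      by (intro sum.cong refl) (simp add: Hij sum_distrib_left sum_distrib_right)
    finally show ?thesis .
  qed
  have shift: "g (c1.sidx i) j = g i (c2.sidx j)" for i j
    unfolding g_def moment_def c1.sidx c2.sidx by simp
  have part1: "(x - y) * Kba S Sbi n1 p1 n2 p2 l b' a' x y =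
               (\<Sum>b=1..p2. Abar_plus g n2 p2 l b b' x * Aminus g n1 p1 n2 p2 (l - 1) b a' y)
             - (\<Sum>a=1..p1. Abar_minus g n1 p1 n2 p2 (l - 1) a b' x * Aplus g n1 p1 l a a' y)"
    if "a'\<in>{1..p1}" "b'\<in>{1..p2}" for a' b' x y
  proof -
    let ?U = "chi n2 p2 b' x" and ?V = "chi n1 p1 a' y"
    let ?H = "\<lambda>i j. H $$ (i,j)"
    have core: "(\<Sum>i<l. \<Sum>j<l. ?U (c2.sidx i) * ?H i j * ?V j) - (\<Sum>i<l. \<Sum>j<l. ?U i * ?H i j * ?V (c1.sidx j)) =
   (\<Sum>b\<in>{i. i<l \<and> l \<le> c2.sidx i}. (?U (c2.sidx b) - (\<Sum>i<l. \<Sum>j<l. ?U i * ?H i j * g j (c2.sidx b))) * (\<Sum>j<l. ?H b j * ?V j))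
 - (\<Sum>a\<in>{i. i<l \<and> l \<le> c1.sidx i}. (\<Sum>i<l. ?U i * ?H i a) * (?V (c1.sidx a) - (\<Sum>i<l. \<Sum>j<l. g (c1.sidx a) i * ?H i j * ?V j)))"
    proof (rule cd_core)
      show "\<And>i j. i<l \<Longrightarrow> j<l \<Longrightarrow> (\<Sum>k<l. H $$ (i,k) * g k j) = (if i=j then 1 else 0)" by (rule HGs)
      show "\<And>i j. i<l \<Longrightarrow> j<l \<Longrightarrow> (\<Sum>k<l. g i k * H $$ (k,j)) = (if i=j then 1 else 0)" by (rule GHs)
      show "\<And>i j. g (c1.sidx i) j = g i (c2.sidx j)" by (rule shift)
    qed
    have lhs: "(\<Sum>i<l. \<Sum>j<l. ?U (c2.sidx i) * ?H i j * ?V j) - (\<Sum>i<l. \<Sum>j<l. ?U i * ?H i j * ?V (c1.sidx j))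
       = (x - y) * Kba S Sbi n1 p1 n2 p2 l b' a' x y"
      unfolding Kform c1.chi_sidx c2.chi_sidx
      by (simp add: sum_distrib_left left_diff_distrib sum_subtractf mult_ac)
    have r2: "(\<Sum>b\<in>{i. i<l \<and> l \<le> c2.sidx i}. (?U (c2.sidx b) - (\<Sum>i<l. \<Sum>j<l. ?U i * ?H i j * g j (c2.sidx b))) * (\<Sum>j<l. ?H b j * ?V j))
        = (\<Sum>b=1..p2. Abar_plus g n2 p2 l b b' x * Aminus g n1 p1 n2 p2 (l - 1) b a' y)"
      unfolding c2.bset[OF l2] sum.reindex[OF c2.binj[OF l2]] o_def
    proof (intro sum.cong refl)
      fix b assume b: "b \<in> {1..p2}"
      show "(?U (c2.sidx (idx_minus n2 p2 b (l-1))) - (\<Sum>i<l. \<Sum>j<l. ?U i * ?H i j * g j (c2.sidx (idx_minus n2 p2 b (l-1))))) * (\<Sum>j<l. ?H (idx_minus n2 p2 b (l-1)) j * ?V j)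
        = Abar_plus g n2 p2 l b b' x * Aminus g n1 p1 n2 p2 (l - 1) b a' y"
        by (simp only: c2.plus_minus[OF l2 b] Abar_plus_def Aminus_def Sl H_def)
    qed
    have r1: "(\<Sum>a\<in>{i. i<l \<and> l \<le> c1.sidx i}. (\<Sum>i<l. ?U i * ?H i a) * (?V (c1.sidx a) - (\<Sum>i<l. \<Sum>j<l. g (c1.sidx a) i * ?H i j * ?V j)))
        = (\<Sum>a=1..p1. Abar_minus g n1 p1 n2 p2 (l - 1) a b' x * Aplus g n1 p1 l a a' y)"
      unfolding c1.bset[OF l1] sum.reindex[OF c1.binj[OF l1]] o_def
    proof (intro sum.cong refl)
      fix a assume a: "a \<in> {1..p1}"
      show "(\<Sum>i<l. ?U i * ?H i (idx_minus n1 p1 a (l-1))) * (?V (c1.sidx (idx_minus n1 p1 a (l-1))) - (\<Sum>i<l. \<Sum>j<l. g (c1.sidx (idx_minus n1 p1 a (l-1))) i * ?H i j * ?V j))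
        = Abar_minus g n1 p1 n2 p2 (l - 1) a b' x * Aplus g n1 p1 l a a' y"
        by (simp only: c1.plus_minus[OF l1 a] Abar_minus_def Aplus_def Sl H_def)
    qed
    show ?thesis using core unfolding lhs r1 r2 .
  qed
  show "(\<forall>a'\<in>{1..p1}. \<forall>b'\<in>{1..p2}. \<forall>x y.
             (x - y) * Kba S Sbi n1 p1 n2 p2 l b' a' x y =
               (\<Sum>b=1..p2. Abar_plus g n2 p2 l b b' x * Aminus g n1 p1 n2 p2 (l - 1) b a' y)
             - (\<Sum>a=1..p1. Abar_minus g n1 p1 n2 p2 (l - 1) a b' x * Aplus g n1 p1 l a a' y))
        \<and> (\<forall>x y.
             (x - y) * Kfull S Sbi n1 p1 n2 p2 w1 w2 l x y =
               (\<Sum>b=1..p2. Qbar_plus g n2 p2 w2 l b x * Qminus g n1 p1 n2 p2 w1 (l - 1) b y)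
             - (\<Sum>a=1..p1. Qbar_minus g n1 p1 n2 p2 w2 (l - 1) a x * Qplus g n1 p1 w1 l a y))"
  proof (intro conjI ballI allI)
    fix a' b' x y assume "a'\<in>{1..p1}" "b'\<in>{1..p2}"
    thus "(x - y) * Kba S Sbi n1 p1 n2 p2 l b' a' x y =
               (\<Sum>b=1..p2. Abar_plus g n2 p2 l b b' x * Aminus g n1 p1 n2 p2 (l - 1) b a' y)
             - (\<Sum>a=1..p1. Abar_minus g n1 p1 n2 p2 (l - 1) a b' x * Aplus g n1 p1 l a a' y)"
      by (rule part1)
  next
    fix x y
    have K: "Kfull S Sbi n1 p1 n2 p2 w1 w2 l x y =
      (\<Sum>a'\<in>{1..p1}. \<Sum>b'\<in>{1..p2}. w1 a' y * w2 b' x * Kba S Sbi n1 p1 n2 p2 l b' a' x y)"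
      unfolding Kfull_def Qlf_def Qbarlf_def prod_sums Kba_def by (simp add: mult.commute)
    have R1: "(\<Sum>b=1..p2. Qbar_plus g n2 p2 w2 l b x * Qminus g n1 p1 n2 p2 w1 (l - 1) b y) =
      (\<Sum>b'\<in>{1..p2}. \<Sum>a'\<in>{1..p1}. w2 b' x * w1 a' y *
         (\<Sum>b=1..p2. Abar_plus g n2 p2 l b b' x * Aminus g n1 p1 n2 p2 (l - 1) b a' y))"
      unfolding Qbar_plus_def Qminus_def prod_sums ..
    have R2: "(\<Sum>a=1..p1. Qbar_minus g n1 p1 n2 p2 w2 (l - 1) a x * Qplus g n1 p1 w1 l a y) =
      (\<Sum>b'\<in>{1..p2}. \<Sum>a'\<in>{1..p1}. w2 b' x * w1 a' y *
         (\<Sum>a=1..p1. Abar_minus g n1 p1 n2 p2 (l - 1) a b' x * Aplus g n1 p1 l a a' y))"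
      unfolding Qbar_minus_def Qplus_def prod_sums ..
    show "(x - y) * Kfull S Sbi n1 p1 n2 p2 w1 w2 l x y =
               (\<Sum>b=1..p2. Qbar_plus g n2 p2 w2 l b x * Qminus g n1 p1 n2 p2 w1 (l - 1) b y)
             - (\<Sum>a=1..p1. Qbar_minus g n1 p1 n2 p2 w2 (l - 1) a x * Qplus g n1 p1 w1 l a y)"
      unfolding K R1 R2 by (rule fin_lemma) (rule part1)
  qed
qed


end
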